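(* Let $U\in\mathbb R^{n\times r}$ and $V\in\mathbb R^{T\times r}$ have orthonormal columns, and let $\mathbf T=\{UA^\top+BV^\top+a\mathbf 1^\top: A\in\mathbb R^{T\times r},B\in\mathbb R^{n\times r},a\in\mathbb R^n\}$. Let $\rho=(I-VV^\top)\mathbf 1$ and assume $\rho\ne 0$. Then the orthogonal projection onto $\mathbf T^\perp$ is, for every $X\in\mathbb R^{n\times T}$, $$P_{\mathbf T^\perp}(X)=(I-UU^\top)\,X\Big(I-\frac{\rho\rho^\top}{\|\rho\|^2}\Big)(I-VV^\top).$$
   Context: $\mathbf 1\in\mathbb R^T$ is the all-ones vector; orthogonality is with respect to the Frobenius inner product. *)

theory Defs
  imports "HOL-Analysis.Analysis"
begin

text \<open>Matrices are represented as real ^ 'cols ^ 'rows (HOL-Analysis); the inner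
product on this type is the Frobenius inner product.\<close>

definition ones_vec :: "real ^ 't" where
  "ones_vec = (\<chi> i. 1)"

definition outer :: "real ^ 'm \<Rightarrow> real ^ 'k \<Rightarrow> real ^ 'k ^ 'm" where
  "outer a b = (\<chi> i j. a $ i * b $ j)"

definition tangent_space :: "real ^ 'r ^ 'n \<Rightarrow> real ^ 'r ^ 't \<Rightarrow> (real ^ 't ^ 'n) set" where
  "tangent_space U V =
     {U ** transpose A + B ** transpose V + outer a ones_vec
        | (A :: real ^ 'r ^ 't) (B :: real ^ 'r ^ 'n) (a :: real ^ 'n). True}"

definition orth_proj :: "'a::real_inner set \<Rightarrow> 'a \<Rightarrow> 'a" where
  "orth_proj S X = (THE p. p \<in> S \<and> (\<forall>y\<in>S. orthogonal (X - p) y))"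

end

theory Submission
  imports Defs
begin

lemma mm_diff_l: fixes A :: "real^'m^'n" shows "A ** (B - C) = A ** B - A ** C"
  by (simp add: matrix_matrix_mult_def vec_eq_iff sum_subtractf right_diff_distrib)
lemma mm_diff_r: fixes A :: "real^'m^'n" shows "(A - B) ** C = A ** C - B ** C"
  by (simp add: matrix_matrix_mult_def vec_eq_iff sum_subtractf left_diff_distrib)
lemma mm_add_r: fixes A :: "real^'m^'n" shows "(A + B) ** C = A ** C + B ** C"
  by (simp add: matrix_matrix_mult_def vec_eq_iff sum.distrib distrib_right)
lemma mm_zero_l [simp]: "(0::real^'m^'n) ** (B::real^'k^'m) = 0"
  by (simp add: matrix_matrix_mult_def vec_eq_iff)
lemma mm_zero_r [simp]: "(A::real^'m^'n) ** (0::real^'k^'m) = 0"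
  by (simp add: matrix_matrix_mult_def vec_eq_iff)
lemma transpose_diff: "transpose ((A::real^'m^'n) - B) = transpose A - transpose B"
  by (simp add: transpose_def vec_eq_iff)
lemma outer_zero [simp]: "outer 0 b = 0"
  by (simp add: outer_def vec_eq_iff)
lemma mm_scaleR_r: "(A::real^'m^'n) ** (k *\<^sub>R B) = k *\<^sub>R (A ** B)"
  by (simp add: matrix_matrix_mult_def vec_eq_iff sum_distrib_left mult_ac)
lemma transpose_zero [simp]: "transpose (0::real^'m^'n) = 0"
  by (simp add: transpose_def vec_eq_iff)
lemma transpose_outer: "transpose (outer a b) = outer b a"
  by (simp add: outer_def transpose_def vec_eq_iff mult.commute)
lemma outer_mv: "outer a b *v c = (b \<bullet> c) *\<^sub>R a"
  by (simp add: outer_def matrix_vector_mult_def inner_vec_def vec_eq_iff sum_distrib_left sum_distrib_right mult_ac)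
lemma mm_outer: "(Y::real^'m^'n) ** outer a b = outer (Y *v a) b"
  by (simp add: outer_def matrix_vector_mult_def matrix_matrix_mult_def vec_eq_iff sum_distrib_left sum_distrib_right mult_ac)

lemma inner_mm_left: fixes A :: "real^'m^'n" and B :: "real^'k^'m"
  shows "inner (A ** B) C = inner B (transpose A ** C)"
proof -
  have "inner (A ** B) C = (\<Sum>i\<in>UNIV. \<Sum>k\<in>UNIV. \<Sum>j\<in>UNIV. A$i$j * B$j$k * C$i$k)"
    by (simp add: inner_vec_def matrix_matrix_mult_def sum_distrib_right)
  also have "\<dots> = (\<Sum>i\<in>UNIV. \<Sum>j\<in>UNIV. \<Sum>k\<in>UNIV. A$i$j * B$j$k * C$i$k)"
    by (rule sum.cong[OF refl], rule sum.swap)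
  also have "\<dots> = (\<Sum>j\<in>UNIV. \<Sum>i\<in>UNIV. \<Sum>k\<in>UNIV. A$i$j * B$j$k * C$i$k)"
    by (rule sum.swap)
  also have "\<dots> = (\<Sum>j\<in>UNIV. \<Sum>k\<in>UNIV. \<Sum>i\<in>UNIV. A$i$j * B$j$k * C$i$k)"
    by (rule sum.cong[OF refl], rule sum.swap)
  also have "\<dots> = inner B (transpose A ** C)"
    by (simp add: inner_vec_def matrix_matrix_mult_def transpose_def sum_distrib_left mult_ac)
  finally show ?thesis .
qed

lemma inner_mm_right: fixes A :: "real^'m^'n" and B :: "real^'k^'m"
  shows "inner (A ** B) C = inner A (C ** transpose B)"
proof -
  have "inner (A ** B) C = (\<Sum>i\<in>UNIV. \<Sum>k\<in>UNIV. \<Sum>j\<in>UNIV. A$i$j * B$j$k * C$i$k)"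
    by (simp add: inner_vec_def matrix_matrix_mult_def sum_distrib_right)
  also have "\<dots> = (\<Sum>i\<in>UNIV. \<Sum>j\<in>UNIV. \<Sum>k\<in>UNIV. A$i$j * B$j$k * C$i$k)"
    by (rule sum.cong[OF refl], rule sum.swap)
  also have "\<dots> = inner A (C ** transpose B)"
    by (simp add: inner_vec_def matrix_matrix_mult_def transpose_def sum_distrib_left mult_ac)
  finally show ?thesis .
qed

lemma inner_outer: "inner (outer a b) (Y::real^'m^'n) = inner a (Y *v b)"
  by (simp add: inner_vec_def outer_def matrix_vector_mult_def sum_distrib_left mult_ac)

lemma orth_T_iff:
  fixes U :: "real ^ 'r ^ 'n" and V :: "real ^ 'r ^ 't" and Y :: "real ^ 't ^ 'n"
  shows "Y \<in> orthogonal_comp (tangent_space U V) \<longleftrightarrow>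
    transpose U ** Y = 0 \<and> Y ** V = 0 \<and> Y *v ones_vec = 0"
proof
  assume Y: "Y \<in> orthogonal_comp (tangent_space U V)"
  have mem: "U ** transpose A + B ** transpose V + outer a ones_vec \<in> tangent_space U V" for A B a
    unfolding tangent_space_def by blast
  have o: "inner (U ** transpose A + B ** transpose V + outer a ones_vec) Y = 0" for A B a
    using Y mem[of A B a] unfolding orthogonal_comp_def orthogonal_def by blast
  have "inner (transpose U ** Y) (transpose U ** Y) = 0"
    using o[of "transpose (transpose U ** Y)" 0 0] by (simp add: inner_mm_left)
  moreover have "inner (Y ** V) (Y ** V) = 0"
    using o[of 0 "Y ** V" 0] by (simp add: inner_mm_right)
  moreover have "inner (Y *v ones_vec) (Y *v ones_vec) = 0"
    using o[of 0 0 "Y *v ones_vec"] by (simp add: inner_outer)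
  ultimately show "transpose U ** Y = 0 \<and> Y ** V = 0 \<and> Y *v ones_vec = 0" by simp
next
  assume h: "transpose U ** Y = 0 \<and> Y ** V = 0 \<and> Y *v ones_vec = 0"
  show "Y \<in> orthogonal_comp (tangent_space U V)"
    unfolding orthogonal_comp_def orthogonal_def tangent_space_def
  proof (clarify)
    fix A :: "real^'r^'t" and B :: "real^'r^'n" and a :: "real^'n"
    show "inner (U ** transpose A + B ** transpose V + outer a ones_vec) Y = 0"
      using h by (simp add: inner_add_left inner_mm_left[of U] inner_mm_right[of B] inner_outer)
  qed
qed

theorem lemma4:
  fixes U :: "real ^ 'r ^ 'n" and V :: "real ^ 'r ^ 't" and X :: "real ^ 't ^ 'n"
  assumes "transpose U ** U = mat 1"
      and "transpose V ** V = mat 1"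
      and "(mat 1 - V ** transpose V) *v ones_vec \<noteq> 0"
  shows "orth_proj (orthogonal_comp (tangent_space U V)) X =
    (let \<rho> = (mat 1 - V ** transpose V) *v ones_vec in
      (mat 1 - U ** transpose U) ** X
        ** (mat 1 - (1 / (norm \<rho>)\<^sup>2) *\<^sub>R outer \<rho> \<rho>)
        ** (mat 1 - V ** transpose V))"
proof -
  define S where "S = orthogonal_comp (tangent_space U V)"
  define PU where "PU = (mat 1 - U ** transpose U :: real^'n^'n)"
  define PV where "PV = (mat 1 - V ** transpose V :: real^'t^'t)"
  define \<rho> where "\<rho> = PV *v ones_vec"
  define Q where "Q = (mat 1 - (1 / (norm \<rho>)\<^sup>2) *\<^sub>R outer \<rho> \<rho> :: real^'t^'t)"
  define p where "p = PU ** X ** Q ** PV"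
  have rho0: "\<rho> \<noteq> 0" using assms(3) unfolding \<rho>_def PV_def .
  have tPU: "transpose PU = PU" unfolding PU_def
    by (simp add: transpose_diff matrix_transpose_mul)
  have tPV: "transpose PV = PV" unfolding PV_def
    by (simp add: transpose_diff matrix_transpose_mul)
  have tQ: "transpose Q = Q" unfolding Q_def
    by (simp add: transpose_diff transpose_scalar transpose_outer)
  have UPU: "transpose U ** PU = 0" unfolding PU_def
    by (simp add: mm_diff_l matrix_mul_assoc assms(1))
  have PVV: "PV ** V = 0" unfolding PV_def
    by (simp add: mm_diff_r matrix_mul_assoc[symmetric] assms(2))
  have Qrho: "Q *v \<rho> = 0"
  proof -
    have n: "norm \<rho> ^ 2 = \<rho> \<bullet> \<rho>" by (simp add: power2_norm_eq_inner)
    have "norm \<rho> \<noteq> 0" using rho0 by simp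
    then show ?thesis unfolding Q_def
      by (simp add: matrix_vector_mult_diff_rdistrib scaleR_matrix_vector_assoc[symmetric] outer_mv n[symmetric])
  qed
  have pS: "p \<in> S" unfolding S_def orth_T_iff
  proof (intro conjI)
    show "transpose U ** p = 0" unfolding p_def
      by (simp add: matrix_mul_assoc UPU)
    show "p ** V = 0" unfolding p_def
      by (simp add: matrix_mul_assoc[symmetric] PVV)
    show "p *v ones_vec = 0" unfolding p_def
      by (simp add: matrix_vector_mul_assoc[symmetric] \<rho>_def[symmetric] Qrho)
  qed
  have pO: "orthogonal (X - p) y" if "y \<in> S" for y
  proof -
    from that have h: "transpose U ** y = 0" "y ** V = 0" "y *v ones_vec = 0"
      unfolding S_def orth_T_iff by auto
    have "PU ** y = y" unfolding PU_def
      by (simp add: mm_diff_r matrix_mul_assoc[symmetric] h)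
    have yPV: "y ** PV = y" unfolding PV_def
      by (simp add: mm_diff_l matrix_mul_assoc h)
    have yrho: "y *v \<rho> = 0" unfolding \<rho>_def
      by (simp add: matrix_vector_mul_assoc yPV h)
    have yQ: "y ** Q = y" unfolding Q_def
      by (simp add: mm_diff_l mm_scaleR_r mm_outer yrho)
    have "inner p y = inner X (PU ** (y ** PV ** Q))"
      unfolding p_def
      by (simp only: inner_mm_right[of "PU ** X ** Q" PV] inner_mm_right[of "PU ** X" Q]
          inner_mm_left[of PU X] tPU tPV tQ)
    also have "\<dots> = inner X y" using yPV yQ \<open>PU ** y = y\<close> by simp
    finally show ?thesis unfolding orthogonal_def by (simp add: inner_diff_left)
  qed
  have sub: "subspace S" unfolding S_def by (rule subspace_orthogonal_comp)
  have "orth_proj S X = p" unfolding orth_proj_def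
  proof (rule the_equality)
    show "p \<in> S \<and> (\<forall>y\<in>S. orthogonal (X - p) y)" using pS pO by blast
  next
    fix q assume q: "q \<in> S \<and> (\<forall>y\<in>S. orthogonal (X - q) y)"
    have d: "q - p \<in> S" using q pS sub by (simp add: subspace_diff)
    have "inner (X - p) (q - p) = 0" using pO[OF d] by (simp add: orthogonal_def)
    moreover have "inner (X - q) (q - p) = 0" using q d by (simp add: orthogonal_def)
    ultimately have "inner (q - p) (q - p) = 0"
      by (simp add: inner_diff_left inner_diff_right algebra_simps)
    then show "q = p" by simp
  qed
  then show ?thesis unfolding S_def p_def PU_def Q_def PV_def \<rho>_def Let_def .
qed

end
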